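(* The two-sided ideal $(z')=z'U^+$ is completely prime, i.e. $U^+/(z')$ is a domain.
   Context: $\Bbbk$ is an algebraically closed field of characteristic zero and $q\in\Bbbk^\times$ is not a root of unity. $U^+$ is the $\Bbbk$-algebra generated by $e_1,e_2$ with relations (S1) $e_1^2e_2-(q^2+q^{-2})e_1e_2e_1+e_2e_1^2=0$ and (S2) $e_2^3e_1-(q^2+1+q^{-2})e_2^2e_1e_2+(q^2+1+q^{-2})e_2e_1e_2^2-e_1e_2^3=0$. Set $e_3=e_1e_2-q^2e_2e_1$, $w=e_2e_3-e_3e_2$, $z'=e_1w-q^{-4}we_1$ (a central element). *)

theory Defs
  imports "HOL-Library.Poly_Mapping" "HOL-Computational_Algebra.Polynomial"
begin

datatype letter = L1 | L2

datatype word = W "letter list"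

instantiation word :: monoid_add
begin
definition zero_word :: word where "zero_word = W []"
fun plus_word :: "word \<Rightarrow> word \<Rightarrow> word" where
  "plus_word (W a) (W b) = W (a @ b)"
instance
proof
  fix a b c :: word
  show "a + b + c = a + (b + c)" by (cases a; cases b; cases c) simp
  show "0 + a = a" by (cases a) (simp add: zero_word_def)
  show "a + 0 = a" by (cases a) (simp add: zero_word_def)
qed
end

text \<open>The free algebra k<x1,x2> over a commutative ring k: finitely supported
  functions from words to k, with the convolution (monoid algebra) product.\<close>
type_synonym 'k freealg = "word \<Rightarrow>\<^sub>0 'k"

definition scal :: "'k::comm_ring_1 \<Rightarrow> 'k freealg" where
  "scal c = Poly_Mapping.single 0 c"

definition gen1 :: "'k::comm_ring_1 freealg" where
  "gen1 = Poly_Mapping.single (W [L1]) 1"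

definition gen2 :: "'k::comm_ring_1 freealg" where
  "gen2 = Poly_Mapping.single (W [L2]) 1"

inductive_set two_sided_ideal :: "'k::comm_ring_1 freealg set \<Rightarrow> 'k freealg set"
  for S where
  gen: "s \<in> S \<Longrightarrow> s \<in> two_sided_ideal S"
| zero: "0 \<in> two_sided_ideal S"
| add: "a \<in> two_sided_ideal S \<Longrightarrow> b \<in> two_sided_ideal S \<Longrightarrow> a + b \<in> two_sided_ideal S"
| mult: "a \<in> two_sided_ideal S \<Longrightarrow> u * a * v \<in> two_sided_ideal S"

definition completely_prime :: "'k::comm_ring_1 freealg set \<Rightarrow> bool" where
  "completely_prime J \<longleftrightarrow> 1 \<notin> J \<and> (\<forall>a b. a * b \<in> J \<longrightarrow> a \<in> J \<or> b \<in> J)"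

definition rel_S1 :: "'k::field \<Rightarrow> 'k freealg" where
  "rel_S1 q = gen1 * gen1 * gen2 - scal (q^2 + inverse (q^2)) * gen1 * gen2 * gen1
             + gen2 * gen1 * gen1"

definition rel_S2 :: "'k::field \<Rightarrow> 'k freealg" where
  "rel_S2 q = gen2 * gen2 * gen2 * gen1
     - scal (q^2 + 1 + inverse (q^2)) * gen2 * gen2 * gen1 * gen2
     + scal (q^2 + 1 + inverse (q^2)) * gen2 * gen1 * gen2 * gen2
     - gen1 * gen2 * gen2 * gen2"

definition Uplus_ideal :: "'k::field \<Rightarrow> 'k freealg set" where
  "Uplus_ideal q = two_sided_ideal {rel_S1 q, rel_S2 q}"

definition e3 :: "'k::field \<Rightarrow> 'k freealg" where
  "e3 q = gen1 * gen2 - scal (q^2) * gen2 * gen1"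

definition w_el :: "'k::field \<Rightarrow> 'k freealg" where
  "w_el q = gen2 * e3 q - e3 q * gen2"

definition z' :: "'k::field \<Rightarrow> 'k freealg" where
  "z' q = gen1 * w_el q - scal (inverse (q^4)) * w_el q * gen1"

text \<open>Preimage in the free algebra of the ideal (z') of U^+.\<close>
definition z'_ideal :: "'k::field \<Rightarrow> 'k freealg set" where
  "z'_ideal q = two_sided_ideal {rel_S1 q, rel_S2 q, z' q}"

definition alg_closed_field :: "'k::field itself \<Rightarrow> bool" where
  "alg_closed_field _ \<longleftrightarrow> (\<forall>p :: 'k poly. degree p \<ge> 1 \<longrightarrow> (\<exists>x. poly p x = 0))"

end

theory Submission
  imports Defs "HOL-Library.Product_Plus" "HOL-Library.Product_Lexorder"
begin

type_synonym ex = "nat \<times> nat \<times> nat"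
type_synonym 'k qa = "ex \<Rightarrow>\<^sub>0 'k"

definition ext :: "('a \<Rightarrow> 'b::zero \<Rightarrow> 'c::comm_monoid_add) \<Rightarrow> ('a \<Rightarrow>\<^sub>0 'b) \<Rightarrow> 'c" where
  "ext g X = (\<Sum>a\<in>Poly_Mapping.keys X. g a (Poly_Mapping.lookup X a))"

lemma ext_zero[simp]: "ext g 0 = 0" by (simp add: ext_def)

lemma ext_single: assumes "g k 0 = 0" shows "ext g (Poly_Mapping.single k c) = g k c"
  using assms by (cases "c = 0") (simp_all add: ext_def)

lemma ext_superset: assumes "finite A" "Poly_Mapping.keys X \<subseteq> A" "\<And>a. g a 0 = 0"
  shows "ext g X = (\<Sum>a\<in>A. g a (Poly_Mapping.lookup X a))"
  unfolding ext_def using assms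
  by (intro sum.mono_neutral_left) (auto simp: in_keys_iff)

lemma ext_add: fixes X Y :: "'a \<Rightarrow>\<^sub>0 'b::monoid_add"
  assumes "\<And>a. g a 0 = 0" "\<And>a c d. g a (c + d) = g a c + g a d"
  shows "ext g (X + Y) = ext g X + ext g Y"
proof -
  let ?A = "Poly_Mapping.keys X \<union> Poly_Mapping.keys Y"
  have "ext g (X+Y) = (\<Sum>a\<in>?A. g a (Poly_Mapping.lookup (X+Y) a))"
    by (rule ext_superset) (auto simp: keys_add assms)
  also have "\<dots> = (\<Sum>a\<in>?A. g a (Poly_Mapping.lookup X a)) + (\<Sum>a\<in>?A. g a (Poly_Mapping.lookup Y a))"
    by (simp add: lookup_add assms sum.distrib)
  also have "\<dots> = ext g X + ext g Y"
    by (subst (1 2) ext_superset[where A = ?A]) (auto simp: assms)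
  finally show ?thesis .
qed

lemma ext_fun_add: "ext (\<lambda>a c. g1 a c + g2 a c) X = ext g1 X + ext g2 X"
  by (simp add: ext_def sum.distrib)

lemma ext_fun_zero[simp]: "ext (\<lambda>a c. 0) X = 0"
  by (simp add: ext_def)

lemma pm_expand: "X = (\<Sum>k\<in>Poly_Mapping.keys X. Poly_Mapping.single k (Poly_Mapping.lookup X k))"
  by (rule poly_mapping_eqI) (auto simp: lookup_sum lookup_single when_def in_keys_iff)

lemma pm_induct[case_names zero single add]:
  fixes X :: "'a \<Rightarrow>\<^sub>0 'b::comm_monoid_add"
  assumes "P 0" "\<And>k c. P (Poly_Mapping.single k c)" "\<And>X Y. P X \<Longrightarrow> P Y \<Longrightarrow> P (X + Y)"
  shows "P X"
proof -
  have "P (\<Sum>k\<in>K. Poly_Mapping.single k (Poly_Mapping.lookup X k))" if "finite K" for K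
    using that by (induction K rule: finite_induct) (auto intro: assms)
  then show ?thesis by (subst pm_expand) simp
qed

definition lam :: "'k::field \<Rightarrow> ex \<Rightarrow> ex \<Rightarrow> 'k" where
  "lam q a b = q ^ (2 * snd (snd a) * fst b) *
     (inverse q) ^ (2 * fst (snd a) * fst b + 2 * snd (snd a) * fst (snd b))"

lemma lam_add_left: "lam q (a + b) e = lam q a e * lam q b e"
  by (simp add: lam_def algebra_simps power_add)

lemma lam_add_right: "lam q a (b + e) = lam q a b * lam q a e"
  by (simp add: lam_def algebra_simps power_add)

lemma lam_0_left[simp]: "lam q 0 b = 1" by (simp add: lam_def)
lemma lam_0_right[simp]: "lam q a 0 = 1" by (simp add: lam_def)

lemma lam_nz: "q \<noteq> 0 \<Longrightarrow> lam q a b \<noteq> 0" by (simp add: lam_def)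

definition tw :: "'k::field \<Rightarrow> 'k qa \<Rightarrow> 'k qa \<Rightarrow> 'k qa" where
  "tw q X Y = ext (\<lambda>a c. ext (\<lambda>b d. Poly_Mapping.single (a + b) (c * d * lam q a b)) Y) X"

lemma tw_single_single[simp]:
  "tw q (Poly_Mapping.single a c) (Poly_Mapping.single b d) = Poly_Mapping.single (a + b) (c * d * lam q a b)"
  by (simp add: tw_def ext_single)

lemma tw_zero_left[simp]: "tw q 0 Y = 0" by (simp add: tw_def)
lemma tw_zero_right[simp]: "tw q X 0 = 0" by (simp add: tw_def)

lemma tw_add_left: "tw q (X1 + X2) Y = tw q X1 Y + tw q X2 Y"
  unfolding tw_def
  by (rule ext_add) (simp_all add: single_add distrib_left distrib_right ext_fun_add)

lemma tw_add_right: "tw q X (Y1 + Y2) = tw q X Y1 + tw q X Y2"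
  unfolding tw_def
  by (subst ext_add) (simp_all add: single_add distrib_left distrib_right ext_fun_add)

lemma tw_diff_left: "tw q (X1 - X2) Y = tw q X1 Y - tw q X2 Y"
  by (metis add_diff_cancel diff_add_cancel tw_add_left)
lemma tw_diff_right: "tw q X (Y1 - Y2) = tw q X Y1 - tw q X Y2"
  by (metis add_diff_cancel diff_add_cancel tw_add_right)
lemma tw_uminus_left: "tw q (- X) Y = - tw q X Y"
  by (metis diff_0 tw_diff_left tw_zero_left)
lemma tw_uminus_right: "tw q X (- Y) = - tw q X Y"
  by (metis diff_0 tw_diff_right tw_zero_right)

lemmas tw_lin = tw_add_left tw_add_right tw_diff_left tw_diff_right tw_uminus_left tw_uminus_right

lemma tw_assoc: "tw q (tw q X Y) Z = tw q X (tw q Y Z)"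
proof (induction X rule: pm_induct)
  case (single a c)
  then show ?case
  proof (induction Y rule: pm_induct)
    case (single b d)
    then show ?case
    proof (induction Z rule: pm_induct)
      case (single e f)
      then show ?case by (simp add: lam_add_left lam_add_right add.assoc mult_ac)
    qed (simp_all add: tw_add_right)
  qed (simp_all add: tw_add_right tw_add_left)
qed (simp_all add: tw_add_left)

lemma tw_one_left[simp]: "tw q 1 X = X"
  by (induction X rule: pm_induct) (simp_all add: tw_add_right flip: single_one)

lemma tw_one_right[simp]: "tw q X 1 = X"
  by (induction X rule: pm_induct) (simp_all add: tw_add_left flip: single_one)

lemma tw_sc_comm: "tw q (Poly_Mapping.single 0 c) X = tw q X (Poly_Mapping.single 0 c)"
  by (induction X rule: pm_induct) (simp_all add: tw_add_left tw_add_right mult_ac)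

lemma tw_sc_sc[simp]: "tw q (Poly_Mapping.single 0 c) (tw q (Poly_Mapping.single 0 d) X) = tw q (Poly_Mapping.single 0 (c * d)) X"
  by (simp flip: tw_assoc)

lemma tw_sc_swap: "tw q A (tw q (Poly_Mapping.single 0 c) Y) = tw q (Poly_Mapping.single 0 c) (tw q A Y)"
  by (metis tw_assoc tw_sc_comm)

lemma tw_single_right_expand:
  "tw q P (Poly_Mapping.single m x) = (\<Sum>a\<in>Poly_Mapping.keys P. Poly_Mapping.single (a + m) (Poly_Mapping.lookup P a * x * lam q a m))"
  by (simp add: tw_def ext_single ext_def)

lemma lookup_tw_single_right:
  fixes m p :: ex
  shows "Poly_Mapping.lookup (tw q P (Poly_Mapping.single m x)) (p + m) = Poly_Mapping.lookup P p * x * lam q p m"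
proof -
  have "Poly_Mapping.lookup (tw q P (Poly_Mapping.single m x)) (p + m) = 
      (\<Sum>a\<in>Poly_Mapping.keys P. (if a = p then Poly_Mapping.lookup P a * x * lam q a m else 0))"
    unfolding tw_single_right_expand lookup_sum by (intro sum.cong) (auto simp: lookup_single when_def)
  also have "\<dots> = Poly_Mapping.lookup P p * x * lam q p m"
    by (auto simp: in_keys_iff)
  finally show ?thesis .
qed

lemma lookup_tw_single_right0:
  fixes m p' :: ex
  assumes "\<And>p. p' \<noteq> p + m"
  shows "Poly_Mapping.lookup (tw q P (Poly_Mapping.single m x)) p' = 0"
  unfolding tw_single_right_expand lookup_sum
proof (intro sum.neutral ballI)
  fix a show "Poly_Mapping.lookup (Poly_Mapping.single (a + m) (Poly_Mapping.lookup P a * x * lam q a m)) p' = 0"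
    using not_sym[OF assms[of a]] by (simp add: lookup_single when_def)
qed

lemma lex_add_eq:
  fixes a b m n :: ex
  assumes "a \<le> m" "b \<le> n" "a + b = m + n"
  shows "a = m \<and> b = n"
  using assms by (cases a; cases b; cases m; cases n) (auto simp: less_eq_prod_def)

lemma tw_nz:
  fixes X Y :: "'k::field qa"
  assumes q: "q \<noteq> 0" and X: "X \<noteq> 0" and Y: "Y \<noteq> 0"
  shows "tw q X Y \<noteq> 0"
proof -
  define m where "m = Max (Poly_Mapping.keys X)"
  define n where "n = Max (Poly_Mapping.keys Y)"
  have mk: "m \<in> Poly_Mapping.keys X" using X unfolding m_def by (intro Max_in) auto
  have nk: "n \<in> Poly_Mapping.keys Y" using Y unfolding n_def by (intro Max_in) auto
  have am: "a \<le> m" if "a \<in> Poly_Mapping.keys X" for a using that unfolding m_def by simp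
  have bn: "b \<le> n" if "b \<in> Poly_Mapping.keys Y" for b using that unfolding n_def by simp
  have key: "(a + b = m + n) = (a = m \<and> b = n)" if "a \<in> Poly_Mapping.keys X" "b \<in> Poly_Mapping.keys Y" for a b
    using lex_add_eq[OF am[OF that(1)] bn[OF that(2)]] by blast
  have pt: "Poly_Mapping.lookup (Poly_Mapping.single (a + b) c) (m + n) = (if a = m then if b = n then c else 0 else 0)"
    if "a \<in> Poly_Mapping.keys X" "b \<in> Poly_Mapping.keys Y" for a b c
    using key[OF that] by (simp add: lookup_single when_def)
  have "Poly_Mapping.lookup (tw q X Y) (m + n) =
     (\<Sum>a\<in>Poly_Mapping.keys X. if a = m then (\<Sum>b\<in>Poly_Mapping.keys Y.
        (if b = n then Poly_Mapping.lookup X a * Poly_Mapping.lookup Y b * lam q a b else 0)) else 0)"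
    unfolding tw_def ext_def lookup_sum
  proof (intro sum.cong refl)
    fix a assume a: "a \<in> Poly_Mapping.keys X"
    show "(\<Sum>b\<in>Poly_Mapping.keys Y. Poly_Mapping.lookup (Poly_Mapping.single (a + b)
          (Poly_Mapping.lookup X a * Poly_Mapping.lookup Y b * lam q a b)) (m + n)) =
       (if a = m then (\<Sum>b\<in>Poly_Mapping.keys Y.
        (if b = n then Poly_Mapping.lookup X a * Poly_Mapping.lookup Y b * lam q a b else 0)) else 0)"
      by (subst sum.cong[OF refl pt[OF a]], assumption) (cases "a = m", simp_all)
  qed
  also have "\<dots> = Poly_Mapping.lookup X m * Poly_Mapping.lookup Y n * lam q m n"
    using mk nk by simp
  also have "\<dots> \<noteq> 0" using mk nk q by (simp add: in_keys_iff lam_nz)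
  finally show ?thesis by auto
qed

fun wl :: "word \<Rightarrow> letter list" where "wl (W xs) = xs"

lemma wl_plus[simp]: "wl (a + b) = wl a @ wl b"
  by (cases a; cases b) simp

lemma wl_zero[simp]: "wl 0 = []" by (simp add: zero_word_def)

fun phil :: "letter \<Rightarrow> 'k::field qa" where
  "phil L1 = Poly_Mapping.single (0,1,0) 1"
| "phil L2 = Poly_Mapping.single (1,0,0) 1 + Poly_Mapping.single (0,0,1) 1"

fun phiw :: "'k::field \<Rightarrow> letter list \<Rightarrow> 'k qa" where
  "phiw q [] = 1"
| "phiw q (x # xs) = tw q (phil x) (phiw q xs)"

lemma phiw_append: "phiw q (xs @ ys) = tw q (phiw q xs) (phiw q ys)"
  by (induction xs) (simp_all add: tw_assoc)

definition Phi :: "'k::field \<Rightarrow> 'k freealg \<Rightarrow> 'k qa" where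
  "Phi q f = ext (\<lambda>w c. tw q (Poly_Mapping.single 0 c) (phiw q (wl w))) f"

lemma Phi_single: "Phi q (Poly_Mapping.single w c) = tw q (Poly_Mapping.single 0 c) (phiw q (wl w))"
  unfolding Phi_def by (rule ext_single) simp

lemma Phi_add: "Phi q (f + g) = Phi q f + Phi q g"
  unfolding Phi_def by (rule ext_add) (simp_all add: single_add tw_add_left)

lemma Phi_zero[simp]: "Phi q 0 = 0" by (simp add: Phi_def)

lemma Phi_diff: "Phi q (f - g) = Phi q f - Phi q g"
  by (metis Phi_add add_diff_cancel diff_add_cancel)

lemma Phi_uminus: "Phi q (- f) = - Phi q f"
  by (metis Phi_diff Phi_zero diff_0)

lemma Phi_mult: "Phi q (f * g) = tw q (Phi q f) (Phi q g)"
proof (induction f rule: pm_induct)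
  case (single a c)
  then show ?case
  proof (induction g rule: pm_induct)
    case (single b d)
    define A where "A = phiw q (wl a)"
    define B where "B = phiw q (wl b)"
    have "tw q (tw q (Poly_Mapping.single 0 c) A) (tw q (Poly_Mapping.single 0 d) B)
       = tw q (Poly_Mapping.single 0 c) (tw q A (tw q (Poly_Mapping.single 0 d) B))"
      by (rule tw_assoc)
    also have "\<dots> = tw q (Poly_Mapping.single 0 c) (tw q (Poly_Mapping.single 0 d) (tw q A B))"
      by (simp only: tw_sc_swap[of q A d B])
    also have "\<dots> = tw q (Poly_Mapping.single 0 (c * d)) (tw q A B)" by simp
    finally show ?case
      by (simp add: mult_single Phi_single phiw_append A_def B_def)
  qed (simp_all add: Phi_add distrib_left tw_add_right)
qed (simp_all add: Phi_add distrib_right tw_add_left)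

lemma Phi_scal: "Phi q (scal c) = Poly_Mapping.single 0 c"
  by (simp add: scal_def Phi_single)

lemma Phi_one: "Phi q 1 = 1"
  by (metis Phi_scal scal_def single_one)

lemma Phi_gen1: "Phi q gen1 = Poly_Mapping.single (0,1,0) 1"
  by (simp add: gen1_def Phi_single)

lemma Phi_gen2: "Phi q gen2 = Poly_Mapping.single (1,0,0) 1 + Poly_Mapping.single (0,0,1) 1"
  by (simp add: gen2_def Phi_single)

lemma pm_eq_keysI:
  fixes X Y :: "'a \<Rightarrow>\<^sub>0 'b::zero"
  assumes "\<And>p. p \<in> K \<Longrightarrow> Poly_Mapping.lookup X p = Poly_Mapping.lookup Y p"
    "\<And>p. (\<And>k. k \<in> K \<Longrightarrow> k \<noteq> p) \<Longrightarrow> Poly_Mapping.lookup X p = Poly_Mapping.lookup Y p"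
  shows "X = Y"
proof (rule poly_mapping_eqI)
  fix p show "Poly_Mapping.lookup X p = Poly_Mapping.lookup Y p"
    by (cases "p \<in> K") (auto intro: assms)
qed

lemmas lk_simps = lookup_add lookup_minus lookup_uminus lookup_single when_def

lemma Phi_e3: assumes q: "q \<noteq> 0" shows "Phi q (e3 q) = Poly_Mapping.single (1,1,0) (inverse q ^ 2 - q ^ 2)"
  unfolding e3_def
  apply (simp add: Phi_mult Phi_diff Phi_scal Phi_gen1 Phi_gen2 tw_lin lam_def)
  apply (rule pm_eq_keysI[where K = "{(1,1,0),(0,1,1)}"])
   apply (elim insertE emptyE; simp add: lk_simps eval_nat_numeral)
  using q apply (simp_all add: lk_simps eval_nat_numeral field_simps)
  done

lemma Phi_w: assumes q: "q \<noteq> 0" shows "Phi q (w_el q) = Poly_Mapping.single (2,1,0) ((inverse q ^ 2 - q ^ 2) * (1 - inverse q ^ 2))"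
  unfolding w_el_def
  apply (simp add: Phi_mult Phi_diff Phi_e3[OF q] Phi_gen2 tw_lin lam_def)
  apply (rule pm_eq_keysI[where K = "{(2,1,0),(1,1,1)}"])
   apply (elim insertE emptyE; simp add: lk_simps eval_nat_numeral)
  using q apply (simp_all add: lk_simps eval_nat_numeral field_simps)
  done

lemma Phi_z': assumes q: "q \<noteq> 0" shows "Phi q (z' q) = 0"
  unfolding z'_def
  apply (simp add: Phi_mult Phi_diff Phi_w[OF q] Phi_scal Phi_gen1 tw_lin lam_def)
  apply (rule pm_eq_keysI[where K = "{(2,2,0)}"])
   apply (elim insertE emptyE; simp add: lk_simps eval_nat_numeral)
  using q apply (simp_all add: lk_simps eval_nat_numeral field_simps)
  done

lemma Phi_S1: assumes q: "q \<noteq> 0" shows "Phi q (rel_S1 q) = 0"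
  unfolding rel_S1_def
  apply (simp add: Phi_mult Phi_diff Phi_add Phi_scal Phi_gen1 Phi_gen2 tw_lin lam_def)
  apply (rule pm_eq_keysI[where K = "{(1,2,0),(0,2,1)}"])
   apply (elim insertE emptyE; simp add: lk_simps eval_nat_numeral)
  using q apply (simp_all add: lk_simps eval_nat_numeral field_simps)
  done

lemma Phi_S2: assumes q: "q \<noteq> 0" shows "Phi q (rel_S2 q) = 0"
  unfolding rel_S2_def
  apply (simp add: Phi_mult Phi_diff Phi_add Phi_scal Phi_gen1 Phi_gen2 tw_lin lam_def)
  apply (rule pm_eq_keysI[where K = "{(3,1,0),(2,1,1),(1,1,2),(0,1,3)}"])
   apply (elim insertE emptyE; simp add: lk_simps eval_nat_numeral)
  using q apply (simp_all add: lk_simps eval_nat_numeral field_simps)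
  done

lemma scal_single: "scal c * Poly_Mapping.single k d = Poly_Mapping.single k (c * d)"
  by (simp add: scal_def mult_single)

lemma single_scal: "Poly_Mapping.single k d * scal c = Poly_Mapping.single k (d * c)"
  by (simp add: scal_def mult_single)

lemma scal_comm: "scal c * (x :: 'k::field freealg) = x * scal c"
  by (induction x rule: pm_induct) (simp_all add: scal_single single_scal distrib_left distrib_right mult.commute)

lemma scal_scal: "scal c * scal d = (scal (c * d) :: 'k::field freealg)"
  by (simp add: scal_def mult_single)

lemma scal_one[simp]: "scal 1 = (1 :: 'k::field freealg)" by (simp add: scal_def)
lemma scal_zero[simp]: "scal 0 = (0 :: 'k::field freealg)" by (simp add: scal_def)
lemma scal_add: "scal (c + d) = (scal c + scal d :: 'k::field freealg)" by (simp add: scal_def single_add)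
lemma scal_uminus: "scal (- c) = (- scal c :: 'k::field freealg)" by (simp add: scal_def single_uminus)
lemma scal_diff: "scal (c - d) = (scal c - scal d :: 'k::field freealg)" by (simp add: scal_def single_diff)

lemmas fa_simps = gen1_def gen2_def scal_def ring_distribs mult_single mult.assoc

lemma F1: fixes q :: "'k::field" assumes q: "q \<noteq> 0" shows
  "rel_S1 q = gen1 * e3 q - scal (inverse (q^2)) * e3 q * gen1"
  unfolding rel_S1_def e3_def
  apply (simp add: fa_simps)
  apply (rule pm_eq_keysI[where K = "{W [L1,L1,L2], W [L1,L2,L1], W [L2,L1,L1]}"])
   apply (elim insertE emptyE; simp add: lk_simps)
  using q apply (simp_all add: lk_simps field_simps)
  done

lemma F2: fixes q :: "'k::field" assumes q: "q \<noteq> 0" shows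
  "rel_S2 q = w_el q * gen2 - scal (inverse (q^2)) * gen2 * w_el q"
  unfolding rel_S2_def w_el_def e3_def
  apply (simp add: fa_simps)
  apply (rule pm_eq_keysI[where K = "{W [L1,L2,L2,L2], W [L2,L1,L2,L2], W [L2,L2,L1,L2], W [L2,L2,L2,L1]}"])
   apply (elim insertE emptyE; simp add: lk_simps)
  using q apply (simp_all add: lk_simps field_simps)
  done

lemma Ff: fixes q :: "'k::field" assumes q: "q \<noteq> 0" shows
  "e3 q * w_el q - scal (inverse (q^2)) * w_el q * e3 q =
   scal (q^2) * z' q * gen2 - scal (q^2) * gen2 * z' q - scal (q^2) * gen1 * rel_S2 q + rel_S2 q * gen1"
  unfolding rel_S2_def w_el_def e3_def z'_def
  apply (simp add: fa_simps)
  apply (rule pm_eq_keysI[where K = "{W [L1,L1,L2,L2,L2], W [L1,L2,L1,L2,L2], W [L1,L2,L2,L1,L2], W [L1,L2,L2,L2,L1],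
     W [L2,L1,L1,L2,L2], W [L2,L1,L2,L1,L2], W [L2,L1,L2,L2,L1], W [L2,L2,L1,L1,L2], W [L2,L2,L1,L2,L1], W [L2,L2,L2,L1,L1]}"])
   apply (elim insertE emptyE; simp add: lk_simps)
  using q apply (simp_all add: lk_simps field_simps)
  done

lemma Fg: fixes q :: "'k::field" assumes q: "q \<noteq> 0" shows
  "scal (q^2 - 1) * (e3 q * e3 q + scal (1 + inverse (q^2)) * w_el q * gen1) =
   scal (q^2) * (z' q + rel_S1 q * gen2 - scal (q^2) * gen2 * rel_S1 q)"
  unfolding rel_S1_def w_el_def e3_def z'_def
  apply (simp add: fa_simps)
  apply (rule pm_eq_keysI[where K = "{W [L1,L1,L2,L2], W [L1,L2,L1,L2], W [L1,L2,L2,L1],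
     W [L2,L1,L1,L2], W [L2,L1,L2,L1], W [L2,L2,L1,L1]}"])
   apply (elim insertE emptyE; simp add: lk_simps)
  using q apply (simp_all add: lk_simps field_simps)
  done

lemma J_add: "a \<in> z'_ideal q \<Longrightarrow> b \<in> z'_ideal q \<Longrightarrow> a + b \<in> z'_ideal q"
  unfolding z'_ideal_def by (rule two_sided_ideal.add)
lemma J_mult: "a \<in> z'_ideal q \<Longrightarrow> u * a * v \<in> z'_ideal q"
  unfolding z'_ideal_def by (rule two_sided_ideal.mult)
lemma J_lmult: "a \<in> z'_ideal q \<Longrightarrow> u * a \<in> z'_ideal q" using J_mult[of a q u 1] by simp
lemma J_rmult: "a \<in> z'_ideal q \<Longrightarrow> a * v \<in> z'_ideal q" using J_mult[of a q 1 v] by simp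
lemma J_zero: "0 \<in> z'_ideal q" unfolding z'_ideal_def by (rule two_sided_ideal.zero)
lemma J_uminus: "a \<in> z'_ideal q \<Longrightarrow> - a \<in> z'_ideal q" using J_lmult[of a q "-1"] by simp
lemma J_diff: "a \<in> z'_ideal q \<Longrightarrow> b \<in> z'_ideal q \<Longrightarrow> a - b \<in> z'_ideal q"
  using J_add J_uminus by (metis diff_conv_add_uminus)
lemma J_S1: "rel_S1 q \<in> z'_ideal q" unfolding z'_ideal_def by (rule two_sided_ideal.gen) simp
lemma J_S2: "rel_S2 q \<in> z'_ideal q" unfolding z'_ideal_def by (rule two_sided_ideal.gen) simp
lemma J_z: "z' q \<in> z'_ideal q" unfolding z'_ideal_def by (rule two_sided_ideal.gen) simp

lemma scal_lcomm: "x * (scal c * y) = scal c * (x * (y :: 'k::field freealg))"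
  by (metis mult.assoc scal_comm)
lemma scal_scal_assoc: "scal c * (scal d * y) = scal (c * d) * (y :: 'k::field freealg)"
  by (metis mult.assoc scal_scal)

context
  fixes q :: "'k::field"
  assumes q: "q \<noteq> 0"
begin

abbreviation "JJ \<equiv> z'_ideal q"
abbreviation "E1 \<equiv> (gen1 :: 'k freealg)"
abbreviation "E2 \<equiv> (gen2 :: 'k freealg)"
abbreviation "E3 \<equiv> e3 q"
abbreviation "WW \<equiv> w_el q"
abbreviation "s2 \<equiv> inverse (q^2)"
abbreviation "s4 \<equiv> inverse (q^4)"

lemma C_c: "WW * E2 - scal s2 * E2 * WW \<in> JJ"
  using F2[OF q] J_S2 by metis
lemma C_d: "E1 * E3 - scal s2 * E3 * E1 \<in> JJ"
  using F1[OF q] J_S1 by metis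
lemma C_e: "E1 * WW - scal s4 * WW * E1 \<in> JJ"
  using J_z by (metis z'_def)
lemma C_f: "E3 * WW - scal s2 * WW * E3 \<in> JJ"
  unfolding Ff[OF q]
  by (intro J_add J_diff J_mult J_lmult J_rmult J_z J_S2)

lemma C_g: assumes q2: "q^2 \<noteq> 1" shows "E3 * E3 + scal (1 + s2) * WW * E1 \<in> JJ"
proof -
  let ?X = "E3 * E3 + scal (1 + s2) * WW * E1"
  have "scal (q^2 - 1) * ?X \<in> JJ"
    unfolding Fg[OF q] by (intro J_add J_diff J_mult J_lmult J_rmult J_z J_S1)
  then have "scal (inverse (q^2 - 1)) * (scal (q^2 - 1) * ?X) \<in> JJ" by (rule J_lmult)
  also have "scal (inverse (q^2 - 1)) * (scal (q^2 - 1) * ?X) = ?X"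
    using q2 by (simp only: scal_scal_assoc) simp
  finally show ?thesis .
qed

lemma E3Wpow: "E3 * WW ^ b - scal (s2 ^ b) * WW ^ b * E3 \<in> JJ"
proof (induction b)
  case 0 then show ?case by (simp add: J_zero)
next
  case (Suc b)
  have eq: "E3 * WW ^ Suc b - scal (s2 ^ Suc b) * WW ^ Suc b * E3 =
    (E3 * WW ^ b - scal (s2 ^ b) * WW ^ b * E3) * WW + scal (s2 ^ b) * WW ^ b * (E3 * WW - scal s2 * WW * E3)"
    by (simp add: power_Suc2 ring_distribs mult.assoc scal_lcomm[of "WW ^ b"] scal_scal_assoc del: power_Suc)
  show ?case unfolding eq by (intro J_add J_lmult J_rmult Suc C_f)
qed

lemma E1Wpow: "E1 * WW ^ b - scal (s4 ^ b) * WW ^ b * E1 \<in> JJ"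
proof (induction b)
  case 0 then show ?case by (simp add: J_zero)
next
  case (Suc b)
  have eq: "E1 * WW ^ Suc b - scal (s4 ^ Suc b) * WW ^ Suc b * E1 =
    (E1 * WW ^ b - scal (s4 ^ b) * WW ^ b * E1) * WW + scal (s4 ^ b) * WW ^ b * (E1 * WW - scal s4 * WW * E1)"
    by (simp add: power_Suc2 ring_distribs mult.assoc scal_lcomm[of "WW ^ b"] scal_scal_assoc del: power_Suc)
  show ?case unfolding eq by (intro J_add J_lmult J_rmult Suc C_e)
qed

end

definition mon :: "'k::field \<Rightarrow> nat \<Rightarrow> nat \<Rightarrow> nat \<Rightarrow> nat \<Rightarrow> 'k freealg" where
  "mon q a b c d = gen2 ^ a * (w_el q ^ b * (e3 q ^ c * gen1 ^ d))"

definition lin :: "'k::field \<Rightarrow> ('k \<times> nat \<times> nat \<times> nat \<times> nat) list \<Rightarrow> 'k freealg" where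
  "lin q L = sum_list (map (\<lambda>(c,a,b,cc,d). scal c * mon q a b cc d) L)"

definition valid :: "('k \<times> nat \<times> nat \<times> nat \<times> nat) list \<Rightarrow> bool" where
  "valid L = (\<forall>x\<in>set L. fst (snd (snd (snd x))) \<le> 1)"

definition SP :: "'k::field \<Rightarrow> 'k freealg set" where
  "SP q = {x. \<exists>L. valid L \<and> x - lin q L \<in> z'_ideal q}"

lemma lin_Nil[simp]: "lin q [] = 0" by (simp add: lin_def)
lemma lin_Cons[simp]: "lin q ((c,a,b,cc,d) # L) = scal c * mon q a b cc d + lin q L" by (simp add: lin_def)
lemma lin_append: "lin q (La @ Lb) = lin q La + lin q Lb" by (simp add: lin_def)

lemma valid_Nil[simp]: "valid []" by (simp add: valid_def)
lemma valid_Cons[simp]: "valid ((c,a,b,cc,d) # L) = (cc \<le> 1 \<and> valid L)" by (simp add: valid_def)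
lemma valid_append: "valid (La @ Lb) = (valid La \<and> valid Lb)" by (auto simp add: valid_def)

lemma SP_J: "x \<in> z'_ideal q \<Longrightarrow> x \<in> SP q"
  unfolding SP_def by (rule CollectI, rule exI[of _ "[]"]) simp

lemma SP_mon: "cc \<le> 1 \<Longrightarrow> scal c * mon q a b cc d \<in> SP q"
  unfolding SP_def by (rule CollectI, rule exI[of _ "[(c,a,b,cc,d)]"]) (simp add: J_zero)

lemma SP_mon1: "cc \<le> 1 \<Longrightarrow> mon q a b cc d \<in> SP q"
  using SP_mon[of cc 1] by simp

lemma SP_add: assumes "x \<in> SP q" "y \<in> SP q" shows "x + y \<in> SP q"
proof -
  obtain La Lb where "valid La" "x - lin q La \<in> z'_ideal q" "valid Lb" "y - lin q Lb \<in> z'_ideal q"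
    using assms unfolding SP_def by blast
  moreover have "x + y - lin q (La @ Lb) = (x - lin q La) + (y - lin q Lb)"
    by (simp add: lin_append)
  ultimately show ?thesis unfolding SP_def
    by (metis (no_types, lifting) J_add mem_Collect_eq valid_append)
qed

lemma lin_scale: "lin q (map (\<lambda>(c', r). (c * c', r)) L) = scal c * lin q L"
proof (induction L)
  case (Cons x L)
  obtain c' a b cc d where x: "x = (c',a,b,cc,d)" by (cases x)
  show ?case using Cons by (simp add: x distrib_left scal_scal_assoc)
qed simp

lemma valid_scale: "valid (map (\<lambda>(c', r). (c * c', r)) L) = valid L"
  by (auto simp: valid_def)

lemma SP_scal: assumes "x \<in> SP q" shows "scal c * x \<in> SP q"
proof -
  obtain L where L: "valid L" "x - lin q L \<in> z'_ideal q"
    using assms unfolding SP_def by blast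
  have eq: "scal c * x - lin q (map (\<lambda>(c', r). (c * c', r)) L) = scal c * (x - lin q L)"
    by (simp add: lin_scale right_diff_distrib)
  have "valid (map (\<lambda>(c', r). (c * c', r)) L)" using L(1) valid_scale by blast
  moreover have "scal c * x - lin q (map (\<lambda>(c', r). (c * c', r)) L) \<in> z'_ideal q"
    unfolding eq by (rule J_lmult[OF L(2)])
  ultimately show ?thesis unfolding SP_def by blast
qed

lemma SP_uminus: "x \<in> SP q \<Longrightarrow> - x \<in> SP q"
  using SP_scal[of x q "-1"] by (simp add: scal_uminus)

lemma SP_diff: "x \<in> SP q \<Longrightarrow> y \<in> SP q \<Longrightarrow> x - y \<in> SP q"
  by (metis SP_add SP_uminus diff_conv_add_uminus)

lemma SP_cong: assumes "x - y \<in> z'_ideal q" "y \<in> SP q" shows "x \<in> SP q"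
proof -
  have "x = (x - y) + y" by simp
  then show ?thesis using SP_add SP_J assms by metis
qed

lemma mon_Suc: "mon q (Suc a) b cc d = gen2 * mon q a b cc d"
  by (simp add: mon_def mult.assoc)

lemma lin_shift: "lin q (map (\<lambda>(c, a, r). (c, Suc a, r)) L) = gen2 * lin q L"
proof (induction L)
  case (Cons x L)
  obtain c' a b cc d where x: "x = (c',a,b,cc,d)" by (cases x)
  show ?case using Cons by (simp add: x distrib_left scal_lcomm mon_Suc)
qed simp

lemma valid_shift: "valid (map (\<lambda>(c, a, r). (c, Suc a, r)) L) = valid L"
  by (auto simp: valid_def)

lemma SP_E2: assumes "x \<in> SP q" shows "gen2 * x \<in> SP q"
proof -
  obtain L where L: "valid L" "x - lin q L \<in> z'_ideal q"
    using assms unfolding SP_def by blast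
  have eq: "gen2 * x - lin q (map (\<lambda>(c, a, r). (c, Suc a, r)) L) = gen2 * (x - lin q L)"
    by (simp add: lin_shift right_diff_distrib)
  have "valid (map (\<lambda>(c, a, r). (c, Suc a, r)) L)" using L(1) valid_shift by blast
  moreover have "gen2 * x - lin q (map (\<lambda>(c, a, r). (c, Suc a, r)) L) \<in> z'_ideal q"
    unfolding eq by (rule J_lmult[OF L(2)])
  ultimately show ?thesis unfolding SP_def by blast
qed

lemma scal_neg2: "scal (- a - b) = - (scal (a + b) :: 'k::field freealg)"
  by (metis minus_add_distrib scal_uminus diff_conv_add_uminus)

lemma mainspan:
  fixes q :: "'k::field"
  assumes q: "q \<noteq> 0" and q2: "q^2 \<noteq> 1" and cc: "cc \<le> 1"
  shows "gen1 * mon q a b cc d \<in> SP q \<and> e3 q * mon q a b cc d \<in> SP q \<and> w_el q * mon q a b cc d \<in> SP q"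
proof (induction a)
  case 0
  define R where "R = e3 q ^ cc * gen1 ^ d"
  have hW: "w_el q * mon q 0 b cc d \<in> SP q"
  proof -
    have "w_el q * mon q 0 b cc d = mon q 0 (Suc b) cc d" by (simp add: mon_def mult.assoc)
    then show ?thesis using SP_mon1[OF cc] by simp
  qed
  have hE1: "gen1 * mon q 0 b cc d \<in> SP q"
  proof -
    have j1: "gen1 * (w_el q ^ b * R) - scal (inverse (q^4) ^ b) * (w_el q ^ b * (gen1 * R)) \<in> z'_ideal q"
    proof -
      have "(gen1 * w_el q ^ b - scal (inverse (q^4) ^ b) * w_el q ^ b * gen1) * R \<in> z'_ideal q"
        by (rule J_rmult[OF E1Wpow[OF q]])
      then show ?thesis by (simp add: ring_distribs mult.assoc)
    qed
    have j2: "gen1 * R - scal (inverse (q^2) ^ cc) * (e3 q ^ cc * (gen1 * gen1 ^ d)) \<in> z'_ideal q"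
    proof (cases "cc = 0")
      case True then show ?thesis by (simp add: R_def J_zero)
    next
      case False then have c1: "cc = 1" using cc by simp
      have "(gen1 * e3 q - scal (inverse (q^2)) * e3 q * gen1) * gen1 ^ d \<in> z'_ideal q"
        by (rule J_rmult[OF C_d[OF q]])
      then show ?thesis by (simp add: R_def c1 ring_distribs mult.assoc)
    qed
    have eq: "gen1 * mon q 0 b cc d - scal (inverse (q^4) ^ b * inverse (q^2) ^ cc) * mon q 0 b cc (Suc d) =
       (gen1 * (w_el q ^ b * R) - scal (inverse (q^4) ^ b) * (w_el q ^ b * (gen1 * R)))
       + scal (inverse (q^4) ^ b) * (w_el q ^ b * (gen1 * R - scal (inverse (q^2) ^ cc) * (e3 q ^ cc * (gen1 * gen1 ^ d))))"
      by (simp add: mon_def R_def ring_distribs mult.assoc scal_lcomm[of "w_el q ^ b"] scal_scal_assoc)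
    have "gen1 * mon q 0 b cc d - scal (inverse (q^4) ^ b * inverse (q^2) ^ cc) * mon q 0 b cc (Suc d) \<in> z'_ideal q"
      unfolding eq by (intro J_add J_lmult j1 j2)
    then show ?thesis by (rule SP_cong) (rule SP_mon[OF cc])
  qed
  have hE3: "e3 q * mon q 0 b cc d \<in> SP q"
  proof -
    have j3: "e3 q * (w_el q ^ b * R) - scal (inverse (q^2) ^ b) * (w_el q ^ b * (e3 q * R)) \<in> z'_ideal q"
    proof -
      have "(e3 q * w_el q ^ b - scal (inverse (q^2) ^ b) * w_el q ^ b * e3 q) * R \<in> z'_ideal q"
        by (rule J_rmult[OF E3Wpow[OF q]])
      then show ?thesis by (simp add: ring_distribs mult.assoc)
    qed
    show ?thesis
    proof (cases "cc = 0")
      case True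
      have "e3 q * mon q 0 b cc d - scal (inverse (q^2) ^ b) * mon q 0 b 1 d \<in> z'_ideal q"
        using j3 by (simp add: mon_def R_def True)
      then show ?thesis by (rule SP_cong) (rule SP_mon, simp)
    next
      case False then have c1: "cc = 1" using cc by simp
      have jg: "e3 q * (e3 q * gen1 ^ d) + scal (1 + inverse (q^2)) * (w_el q * (gen1 * gen1 ^ d)) \<in> z'_ideal q"
      proof -
        have "(e3 q * e3 q + scal (1 + inverse (q^2)) * w_el q * gen1) * gen1 ^ d \<in> z'_ideal q"
          by (rule J_rmult[OF C_g[OF q q2]])
        then show ?thesis by (simp add: ring_distribs mult.assoc)
      qed
      have eq: "e3 q * mon q 0 b cc d - scal (- (inverse (q^2) ^ b * (1 + inverse (q^2)))) * mon q 0 (Suc b) 0 (Suc d) =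
        (e3 q * (w_el q ^ b * R) - scal (inverse (q^2) ^ b) * (w_el q ^ b * (e3 q * R)))
        + scal (inverse (q^2) ^ b) * (w_el q ^ b * (e3 q * (e3 q * gen1 ^ d) + scal (1 + inverse (q^2)) * (w_el q * (gen1 * gen1 ^ d))))"
        by (simp add: mon_def R_def c1 ring_distribs mult.assoc scal_lcomm[of "w_el q ^ b"] scal_scal_assoc
             scal_uminus scal_neg2 power_Suc2[of "w_el q"] power_Suc[of "gen1 :: 'k freealg"] del: power_Suc)
      have "e3 q * mon q 0 b cc d - scal (- (inverse (q^2) ^ b * (1 + inverse (q^2)))) * mon q 0 (Suc b) 0 (Suc d) \<in> z'_ideal q"
        unfolding eq by (intro J_add J_lmult j3 jg)
      then show ?thesis by (rule SP_cong) (rule SP_mon, simp)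
    qed
  qed
  show ?case using hW hE1 hE3 by blast
next
  case (Suc a)
  let ?M = "mon q a b cc d"
  have IH1: "gen1 * ?M \<in> SP q" and IH2: "e3 q * ?M \<in> SP q" and IH3: "w_el q * ?M \<in> SP q"
    using Suc by blast+
  have "gen1 * (gen2 * ?M) = e3 q * ?M + scal (q^2) * (gen2 * (gen1 * ?M))"
    by (simp add: e3_def ring_distribs mult.assoc)
  then have h1: "gen1 * mon q (Suc a) b cc d \<in> SP q"
    by (simp add: mon_Suc SP_add IH2 SP_scal SP_E2 IH1)
  have "e3 q * (gen2 * ?M) = gen2 * (e3 q * ?M) - w_el q * ?M"
    by (simp add: w_el_def ring_distribs mult.assoc)
  then have h2: "e3 q * mon q (Suc a) b cc d \<in> SP q"
    by (simp add: mon_Suc SP_diff IH3 SP_E2 IH2)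
  have "w_el q * (gen2 * ?M) - scal (inverse (q^2)) * (gen2 * (w_el q * ?M)) \<in> z'_ideal q"
  proof -
    have "(w_el q * gen2 - scal (inverse (q^2)) * gen2 * w_el q) * ?M \<in> z'_ideal q"
      by (rule J_rmult[OF C_c[OF q]])
    then show ?thesis by (simp add: ring_distribs mult.assoc)
  qed
  then have h3: "w_el q * mon q (Suc a) b cc d \<in> SP q"
    unfolding mon_Suc by (rule SP_cong) (intro SP_scal SP_E2 IH3)
  show ?case using h1 h2 h3 by blast
qed

lemma SP_left:
  fixes q :: "'k::field"
  assumes q: "q \<noteq> 0" "q^2 \<noteq> 1" and X: "X \<in> {gen1, e3 q, w_el q}" and x: "x \<in> SP q"
  shows "X * x \<in> SP q"
proof -
  obtain L where L: "valid L" "x - lin q L \<in> z'_ideal q" using x unfolding SP_def by blast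
  have "X * lin q L \<in> SP q" using L(1)
  proof (induction L)
    case Nil then show ?case by (simp add: SP_J J_zero)
  next
    case (Cons y L)
    obtain c a b cc d where y: "y = (c,a,b,cc,d)" by (cases y)
    have cc: "cc \<le> 1" and vL: "valid L" using Cons.prems y by auto
    have "X * mon q a b cc d \<in> SP q" using mainspan[OF q cc, of a b d] X by auto
    then have "scal c * (X * mon q a b cc d) \<in> SP q" by (rule SP_scal)
    moreover have "X * lin q (y # L) = scal c * (X * mon q a b cc d) + X * lin q L"
      by (simp add: y distrib_left scal_lcomm)
    ultimately show ?case using Cons.IH[OF vL] SP_add by metis
  qed
  moreover have "X * x = X * (x - lin q L) + X * lin q L" by (simp add: right_diff_distrib)
  ultimately show ?thesis using SP_add SP_J J_lmult L(2) by metis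
qed

lemma SP_word:
  fixes q :: "'k::field"
  assumes q: "q \<noteq> 0" "q^2 \<noteq> 1"
  shows "(Poly_Mapping.single (W xs) 1 :: 'k freealg) \<in> SP q"
proof (induction xs)
  case Nil
  have "(Poly_Mapping.single (W []) 1 :: 'k freealg) = mon q 0 0 0 0" by (simp add: mon_def flip: zero_word_def)
  then show ?case using SP_mon1[of 0 q 0 0 0] by simp
next
  case (Cons x xs)
  have e: "(Poly_Mapping.single (W (x # xs)) 1 :: 'k freealg) = Poly_Mapping.single (W [x]) 1 * Poly_Mapping.single (W xs) 1"
    by (simp add: mult_single)
  show ?case
  proof (cases x)
    case L1 then show ?thesis unfolding e using SP_left[OF q, of gen1] Cons by (simp add: gen1_def)
  next
    case L2 then show ?thesis unfolding e using SP_E2 Cons by (simp add: gen2_def)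
  qed
qed

lemma SP_all:
  fixes q :: "'k::field"
  assumes q: "q \<noteq> 0" "q^2 \<noteq> 1"
  shows "f \<in> SP q"
proof (induction f rule: pm_induct)
  case zero then show ?case by (simp add: SP_J J_zero)
next
  case (single k c)
  obtain xs where k: "k = W xs" by (cases k)
  have "Poly_Mapping.single k c = scal c * Poly_Mapping.single (W xs) (1::'k)"
    by (simp add: k scal_single)
  then show ?case using SP_scal SP_word[OF q] by metis
next
  case (add X Y) then show ?case by (rule SP_add)
qed

fun tpow :: "'k::field \<Rightarrow> 'k qa \<Rightarrow> nat \<Rightarrow> 'k qa" where
  "tpow q X 0 = 1"
| "tpow q X (Suc n) = tw q X (tpow q X n)"

lemma Phi_pow: "Phi q (x ^ n) = tpow q (Phi q x) n"
  by (induction n) (simp_all add: Phi_one Phi_mult)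

lemma zero_ex: "(0::ex) = (0,0,0)" by (simp add: zero_prod_def)

lemma tpow_single:
  fixes q :: "'k::field"
  assumes q: "q \<noteq> 0" and x: "x \<noteq> 0"
  shows "\<exists>\<kappa>. \<kappa> \<noteq> 0 \<and> tpow q (Poly_Mapping.single (m1,m2,m3) x) n = Poly_Mapping.single (n*m1, n*m2, n*m3) \<kappa>"
proof (induction n)
  case 0 then show ?case by (intro exI[of _ 1]) (simp flip: zero_ex)
next
  case (Suc n)
  then obtain \<kappa> where k: "\<kappa> \<noteq> 0" "tpow q (Poly_Mapping.single (m1,m2,m3) x) n = Poly_Mapping.single (n*m1, n*m2, n*m3) \<kappa>"
    by blast
  show ?case
    by (intro exI[of _ "x * \<kappa> * lam q (m1,m2,m3) (n*m1, n*m2, n*m3)"]) (simp add: k x q lam_nz)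
qed

lemma c3_nz: fixes q :: "'k::field" assumes q: "q \<noteq> 0" and q4: "q^4 \<noteq> 1"
  shows "inverse q ^ 2 - q ^ 2 \<noteq> 0"
proof
  assume "inverse q ^ 2 - q ^ 2 = 0"
  then have "inverse q ^ 2 * q ^ 2 = q ^ 2 * q ^ 2" by simp
  then have "1 = q ^ 4" using q by (simp add: power_inverse field_simps flip: power_add)
  then show False using q4 by simp
qed

lemma cw_nz: fixes q :: "'k::field" assumes q: "q \<noteq> 0" and q2: "q^2 \<noteq> 1"
  shows "1 - inverse q ^ 2 \<noteq> 0"
  using q q2 by (simp add: field_simps power_inverse)

lemma Phi_tail:
  fixes q :: "'k::field"
  assumes q: "q \<noteq> 0" and q2: "q^2 \<noteq> 1" and q4: "q^4 \<noteq> 1"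
  shows "\<exists>\<kappa>. \<kappa> \<noteq> 0 \<and> Phi q (w_el q ^ b * (e3 q ^ cc * gen1 ^ d)) = Poly_Mapping.single (2*b + cc, b + cc + d, 0) \<kappa>"
proof -
  obtain k1 where k1: "k1 \<noteq> 0" "tpow q (Poly_Mapping.single (2,1,0) ((inverse q ^ 2 - q ^ 2) * (1 - inverse q ^ 2))) b
      = Poly_Mapping.single (b*2, b*1, b*0) k1"
    using tpow_single[OF q, of "(inverse q ^ 2 - q ^ 2) * (1 - inverse q ^ 2)" 2 1 0 b] c3_nz[OF q q4] cw_nz[OF q q2] by auto
  obtain k2 where k2: "k2 \<noteq> 0" "tpow q (Poly_Mapping.single (1,1,0) (inverse q ^ 2 - q ^ 2)) cc
      = Poly_Mapping.single (cc*1, cc*1, cc*0) k2"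
    using tpow_single[OF q, of "inverse q ^ 2 - q ^ 2" 1 1 0 cc] c3_nz[OF q q4] by auto
  obtain k3 where k3: "k3 \<noteq> 0" "tpow q (Poly_Mapping.single (0,1,0) 1) d
      = Poly_Mapping.single (d*0, d*1, d*0) k3"
    using tpow_single[OF q, of 1 0 1 0 d] by auto
  show ?thesis
    apply (intro exI[of _ "k1 * (k2 * k3 * lam q (cc, cc, 0) (0, d, 0)) * lam q (b * 2, b, 0) (cc, cc + d, 0)"])
    using k1 k2 k3 q
    by (simp add: Phi_mult Phi_pow Phi_w[OF q] Phi_e3[OF q] Phi_gen1 lam_nz algebra_simps)
qed

lemma tw_single_left_expand:
  "tw q (Poly_Mapping.single m x) P = (\<Sum>b\<in>Poly_Mapping.keys P. Poly_Mapping.single (m + b) (x * Poly_Mapping.lookup P b * lam q m b))"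
  by (simp add: tw_def ext_single ext_def)

lemma lookup_tw_single_left:
  fixes m p :: ex
  shows "Poly_Mapping.lookup (tw q (Poly_Mapping.single m x) P) (m + p) = x * Poly_Mapping.lookup P p * lam q m p"
proof -
  have "Poly_Mapping.lookup (tw q (Poly_Mapping.single m x) P) (m + p) = 
      (\<Sum>a\<in>Poly_Mapping.keys P. (if a = p then x * Poly_Mapping.lookup P a * lam q m a else 0))"
    unfolding tw_single_left_expand lookup_sum by (intro sum.cong) (auto simp: lookup_single when_def)
  also have "\<dots> = x * Poly_Mapping.lookup P p * lam q m p"
    by (auto simp: in_keys_iff)
  finally show ?thesis .
qed

lemma lookup_tw_single_left0:
  fixes m p' :: ex
  assumes "\<And>p. p' \<noteq> m + p"
  shows "Poly_Mapping.lookup (tw q (Poly_Mapping.single m x) P) p' = 0"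
  unfolding tw_single_left_expand lookup_sum
proof (intro sum.neutral ballI)
  fix a show "Poly_Mapping.lookup (Poly_Mapping.single (m + a) (x * Poly_Mapping.lookup P a * lam q m a)) p' = 0"
    using not_sym[OF assms[of a]] by (simp add: lookup_single when_def)
qed

lemma E2pow_zero:
  fixes q :: "'k::field"
  shows "\<not> (y = 0 \<and> x + z = a) \<Longrightarrow> Poly_Mapping.lookup (tpow q (Phi q gen2) a) (x, y, z) = 0"
proof (induction a arbitrary: x y z)
  case 0
  then show ?case by (auto simp: lookup_one zero_ex when_def)
next
  case (Suc a)
  have A: "Poly_Mapping.lookup (tw q (Poly_Mapping.single (1,0,0) 1) (tpow q (Phi q gen2) a)) (x, y, z) = 0"
  proof (cases x)
    case 0 then show ?thesis by (intro lookup_tw_single_left0) auto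
  next
    case (Suc x')
    have "(x, y, z) = (1,0,0) + (x', y, z)" using Suc by simp
    then show ?thesis using lookup_tw_single_left[of q "(1,0,0)" 1 _ "(x', y, z)"] Suc.IH[where x=x' and y=y and z=z] Suc.prems \<open>x = Suc x'\<close>
      by simp
  qed
  have B: "Poly_Mapping.lookup (tw q (Poly_Mapping.single (0,0,1) 1) (tpow q (Phi q gen2) a)) (x, y, z) = 0"
  proof (cases z)
    case 0 then show ?thesis by (intro lookup_tw_single_left0) auto
  next
    case (Suc z')
    have "(x, y, z) = (0,0,1) + (x, y, z')" using Suc by simp
    then show ?thesis using lookup_tw_single_left[of q "(0,0,1)" 1 _ "(x, y, z')"] Suc.IH[where x=x and y=y and z=z'] Suc.prems \<open>z = Suc z'\<close>
      by simp
  qed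
  show ?case using A B by (simp add: Phi_gen2 tw_add_left lookup_add)
qed

lemma E2pow_top:
  fixes q :: "'k::field"
  shows "Poly_Mapping.lookup (tpow q (Phi q gen2) a) (0, 0, a) = 1"
proof (induction a)
  case 0 then show ?case by (simp add: lookup_one zero_ex)
next
  case (Suc a)
  have A: "Poly_Mapping.lookup (tw q (Poly_Mapping.single (1,0,0) 1) (tpow q (Phi q gen2) a)) (0, 0, Suc a) = 0"
    by (intro lookup_tw_single_left0) auto
  have "Poly_Mapping.lookup (tw q (Poly_Mapping.single (0,0,1) 1) (tpow q (Phi q gen2) a)) ((0,0,1) + (0, 0, a)) = 1"
    by (subst lookup_tw_single_left) (simp add: Suc lam_def)
  then have B: "Poly_Mapping.lookup (tw q (Poly_Mapping.single (0,0,1) 1) (tpow q (Phi q gen2) a)) (0, 0, Suc a) = 1"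
    by simp
  show ?case using A B by (simp add: Phi_gen2 tw_add_left lookup_add)
qed

lemma parity_aux: "(2::nat)*b + cc = 2*b0 + cc0 \<Longrightarrow> cc \<le> 1 \<Longrightarrow> cc0 \<le> 1 \<Longrightarrow> cc = cc0 \<and> b = b0" by presburger
lemma Phi_mon: "Phi q (mon q a b cc d) = tw q (tpow q (Phi q gen2) a) (Phi q (w_el q ^ b * (e3 q ^ cc * gen1 ^ d)))"
  by (simp add: mon_def Phi_mult Phi_pow)

lemma mon_lookup_other:
  fixes q :: "'k::field"
  assumes q: "q \<noteq> 0" "q^2 \<noteq> 1" "q^4 \<noteq> 1" and c: "cc \<le> 1" "cc0 \<le> 1" and a: "a \<le> a0"
    and ne: "(a,b,cc,d) \<noteq> (a0,b0,cc0,d0)"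
  shows "Poly_Mapping.lookup (Phi q (mon q a b cc d)) (2*b0 + cc0, b0 + cc0 + d0, a0) = 0"
proof -
  obtain \<kappa> where k: "\<kappa> \<noteq> 0" "Phi q (w_el q ^ b * (e3 q ^ cc * gen1 ^ d)) = Poly_Mapping.single (2*b + cc, b + cc + d, 0) \<kappa>"
    using Phi_tail[OF q] by blast
  define e0 where "e0 = (2*b0 + cc0, b0 + cc0 + d0, a0)"
  define m where "m = (2*b + cc, b + cc + d, 0::nat)"
  have "Poly_Mapping.lookup (tw q (tpow q (Phi q gen2) a) (Poly_Mapping.single m \<kappa>)) e0 = 0"
  proof (cases "\<exists>p. e0 = p + m")
    case True
    then obtain p where p: "e0 = p + m" by blast
    obtain x y z where pxyz: "p = (x,y,z)" by (cases p) blast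
    have eqs: "2*b0 + cc0 = x + (2*b+cc)" "b0 + cc0 + d0 = y + (b + cc + d)" "a0 = z"
      using p unfolding pxyz e0_def m_def by simp_all
    have "\<not> (y = 0 \<and> x + z = a)"
    proof
      assume h: "y = 0 \<and> x + z = a"
      then have x0: "x = 0" and aa: "a = a0" using a eqs(3) by auto
      then have "2*b + cc = 2*b0 + cc0" using eqs(1) by simp
      then have "cc = cc0 \<and> b = b0" using parity_aux c by blast
      moreover have "b + cc + d = b0 + cc0 + d0" using eqs(2) h by simp
      ultimately show False using ne aa by simp
    qed
    then have "Poly_Mapping.lookup (tpow q (Phi q gen2) a) p = 0" unfolding pxyz by (rule E2pow_zero)
    then show ?thesis unfolding p lookup_tw_single_right by simp
  next
    case False then show ?thesis by (intro lookup_tw_single_right0) blast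
  qed
  then show ?thesis unfolding Phi_mon k(2) e0_def m_def .
qed

lemma mon_lookup_self:
  fixes q :: "'k::field"
  assumes q: "q \<noteq> 0" "q^2 \<noteq> 1" "q^4 \<noteq> 1"
  shows "Poly_Mapping.lookup (Phi q (mon q a0 b0 cc0 d0)) (2*b0 + cc0, b0 + cc0 + d0, a0) \<noteq> 0"
proof -
  obtain \<kappa> where k: "\<kappa> \<noteq> 0" "Phi q (w_el q ^ b0 * (e3 q ^ cc0 * gen1 ^ d0)) = Poly_Mapping.single (2*b0 + cc0, b0 + cc0 + d0, 0) \<kappa>"
    using Phi_tail[OF q] by blast
  define m where "m = (2*b0 + cc0, b0 + cc0 + d0, 0::nat)"
  have e: "(2*b0 + cc0, b0 + cc0 + d0, a0) = (0,0,a0) + m" by (simp add: m_def)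
  have "Poly_Mapping.lookup (tw q (tpow q (Phi q gen2) a0) (Poly_Mapping.single m \<kappa>)) ((0,0,a0) + m) \<noteq> 0"
    unfolding lookup_tw_single_right E2pow_top using k(1) q(1) by (simp add: lam_nz)
  then show ?thesis unfolding Phi_mon k(2) e m_def .
qed

lemma lookup_sc_left: "Poly_Mapping.lookup (tw q (Poly_Mapping.single 0 c) X) p = c * Poly_Mapping.lookup X p"
  using lookup_tw_single_left[of q 0 c X p] by simp

lemma lookup_Phi_lin:
  "Poly_Mapping.lookup (Phi q (lin q L)) p = sum_list (map (\<lambda>(c,a,b,cc,d). c * Poly_Mapping.lookup (Phi q (mon q a b cc d)) p) L)"
proof (induction L)
  case (Cons x L)
  obtain c a b cc d where x: "x = (c,a,b,cc,d)" by (cases x)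
  show ?case using Cons by (simp add: x Phi_add Phi_mult Phi_scal lookup_add lookup_sc_left)
qed simp

definition monk :: "'k::field \<Rightarrow> nat \<times> nat \<times> nat \<times> nat \<Rightarrow> 'k freealg" where
  "monk q k = (case k of (a,b,cc,d) \<Rightarrow> mon q a b cc d)"

lemma lin_split:
  "lin q L = lin q (filter (\<lambda>x. snd x \<noteq> k) L) + scal (sum_list (map fst (filter (\<lambda>x. snd x = k) L))) * monk q k"
proof (induction L)
  case Nil then show ?case by simp
next
  case (Cons x L)
  obtain c a b cc d where x: "x = (c,a,b,cc,d)" by (cases x)
  show ?case
  proof (cases "(a,b,cc,d) = k")
    case True
    then have k: "k = (a,b,cc,d)" by simp
    show ?thesis using Cons unfolding x k by (simp add: monk_def scal_add distrib_right add_ac)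
  next
    case False
    then show ?thesis using Cons by (simp add: x add_ac)
  qed
qed

lemma sum_list_if:
  fixes v :: "'k::field"
  assumes "\<And>x. x \<in> set L \<Longrightarrow> f x = (if snd x = k then fst x * v else 0)"
  shows "sum_list (map f L) = sum_list (map fst (filter (\<lambda>x. snd x = k) L)) * v"
  using assms by (induction L) (auto simp: distrib_right)

lemma indep:
  fixes q :: "'k::field"
  assumes q: "q \<noteq> 0" "q^2 \<noteq> 1" "q^4 \<noteq> 1"
  shows "valid L \<Longrightarrow> Phi q (lin q L) = 0 \<Longrightarrow> lin q L = 0"
proof (induction "length L" arbitrary: L rule: less_induct)
  case less
  show ?case
  proof (cases "L = []")
    case True then show ?thesis by simp
  next
    case False
    define A where "A = (\<lambda>x::('k \<times> nat \<times> nat \<times> nat \<times> nat). fst (snd x)) ` set L"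
    define a0 where "a0 = Max A"
    have "a0 \<in> A" unfolding a0_def A_def using False by (intro Max_in) auto
    then obtain y where y: "y \<in> set L" "fst (snd y) = a0" unfolding A_def by blast
    obtain c0 b0 cc0 d0 where y0: "y = (c0, a0, b0, cc0, d0)" using y(2) by (cases y) auto
    have vL: "\<And>x. x \<in> set L \<Longrightarrow> fst (snd (snd (snd x))) \<le> 1" using less.prems(1) unfolding valid_def by blast
    have cc0: "cc0 \<le> 1" using vL[OF y(1)] y0 by simp
    have amax: "fst (snd x) \<le> a0" if "x \<in> set L" for x
      unfolding a0_def A_def using that by (intro Max_ge) auto
    define k0 where "k0 = (a0, b0, cc0, d0)"
    define e0 where "e0 = (2*b0 + cc0, b0 + cc0 + d0, a0)"
    define v0 where "v0 = Poly_Mapping.lookup (Phi q (mon q a0 b0 cc0 d0)) e0"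
    have v0: "v0 \<noteq> 0" unfolding v0_def e0_def by (rule mon_lookup_self[OF q])
    define S where "S = sum_list (map fst (filter (\<lambda>x. snd x = k0) L))"
    define L' where "L' = filter (\<lambda>x. snd x \<noteq> k0) L"
    have "Poly_Mapping.lookup (Phi q (lin q L)) e0 = S * v0"
      unfolding lookup_Phi_lin S_def
    proof (rule sum_list_if)
      fix x assume x: "x \<in> set L"
      obtain c a b cc d where xx: "x = (c,a,b,cc,d)" by (cases x)
      have cc: "cc \<le> 1" using vL[OF x] xx by simp
      have aa: "a \<le> a0" using amax[OF x] xx by simp
      show "(\<lambda>(c,a,b,cc,d). c * Poly_Mapping.lookup (Phi q (mon q a b cc d)) e0) x = (if snd x = k0 then fst x * v0 else 0)"
      proof (cases "(a,b,cc,d) = k0")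
        case True then show ?thesis by (simp add: xx k0_def v0_def)
      next
        case False
        have "Poly_Mapping.lookup (Phi q (mon q a b cc d)) e0 = 0"
          using mon_lookup_other[OF q cc cc0 aa, of b d b0 d0] False unfolding k0_def e0_def by blast
        then show ?thesis using False by (simp add: xx)
      qed
    qed
    then have "S = 0" using less.prems(2) v0 by simp
    then have linL: "lin q L = lin q L'" using lin_split[of q L k0] unfolding S_def L'_def by simp
    have "length L' < length L" unfolding L'_def using y y0 k0_def by (intro length_filter_less) auto
    moreover have "valid L'" using less.prems(1) unfolding L'_def valid_def by auto
    moreover have "Phi q (lin q L') = 0" using less.prems(2) linL by simp
    ultimately have "lin q L' = 0" using less.hyps by blast
    then show ?thesis using linL by simp
  qed
qed

theorem mainTheorem13:
  fixes q :: "'k::field_char_0"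
  assumes "alg_closed_field TYPE('k)"
    and "q \<noteq> 0"
    and "\<forall>n::nat. n > 0 \<longrightarrow> q ^ n \<noteq> 1"
  shows "completely_prime (z'_ideal q)"
proof -
  have q: "q \<noteq> 0" and q2: "q^2 \<noteq> 1" and q4: "q^4 \<noteq> 1" using assms by auto
  have PhiJ: "Phi q x = 0" if "x \<in> z'_ideal q" for x
  proof -
    from that have "x \<in> two_sided_ideal {rel_S1 q, rel_S2 q, z' q}" by (simp add: z'_ideal_def)
    then show ?thesis
      by induction (auto simp: Phi_S1[OF q] Phi_S2[OF q] Phi_z'[OF q] Phi_add Phi_mult)
  qed
  have ker: "x \<in> z'_ideal q" if "Phi q x = 0" for x
  proof -
    obtain L where L: "valid L" "x - lin q L \<in> z'_ideal q" using SP_all[OF q q2, of x] unfolding SP_def by blast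
    have "Phi q (lin q L) = Phi q x - Phi q (x - lin q L)" by (simp add: Phi_diff)
    then have "Phi q (lin q L) = 0" using that PhiJ[OF L(2)] by simp
    then have "lin q L = 0" using indep[OF q q2 q4 L(1)] by blast
    then show ?thesis using L(2) by simp
  qed
  show ?thesis unfolding completely_prime_def
  proof (intro conjI allI impI)
    show "1 \<notin> z'_ideal q"
    proof
      assume "1 \<in> z'_ideal q"
      then have "Phi q 1 = 0" by (rule PhiJ)
      then show False by (simp add: Phi_one)
    qed
  next
    fix a b assume "a * b \<in> z'_ideal q"
    then have "tw q (Phi q a) (Phi q b) = 0" using PhiJ Phi_mult by metis
    then have "Phi q a = 0 \<or> Phi q b = 0" using tw_nz[OF q] by blast
    then show "a \<in> z'_ideal q \<or> b \<in> z'_ideal q" using ker by blast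
  qed
qed


end
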